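(* (i) Let $E$ be a finite set and $\xi\mapsto A(\xi)$, $\xi\in\mathbb R$, a $C^1$ family of complex square matrices indexed by $E\times E$. Assume there is an invertible matrix $U$ such that $\widetilde A(\xi):=A(\xi)U$ is self-adjoint for all $\xi$ and $\partial_\xi\widetilde A(\xi)\geq\beta I$ for some $\beta>0$. Then for every $\alpha>0$, $$\big|\{\xi\in\mathbb R:\|A^{-1}(\xi)\|_0\geq\alpha^{-1}\}\big|\leq2|E|\alpha\beta^{-1}\|U\|_0.$$ (ii) In particular, if $A(\xi)=Z+\xi W$ with $Z,W$ self-adjoint, $W$ invertible and $\beta_1I\leq Z\leq\beta_2I$ with $\beta_1>0$, then for every $\alpha>0$ $$\big|\{\xi\in\mathbb R:\|A^{-1}(\xi)\|_0\geq\alpha^{-1}\}\big|\leq2|E|\alpha\beta_2\beta_1^{-1}\|W^{-1}\|_0.$$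
   Context: $\|\cdot\|_0$ is the operator norm on $\mathbb C^E$ with its Euclidean norm; $\|A^{-1}(\xi)\|_0:=+\infty$ if $A(\xi)$ is not invertible; $|E|$ is the cardinality of $E$; $|\cdot|$ of a subset of $\mathbb R$ is its Lebesgue measure. *)

theory Defs
  imports "HOL-Analysis.Analysis"
begin

text \<open>Matrices indexed by E x E are modelled as complex^'n^'n with 'n a finite type
  (so |E| = CARD('n)); vectors in C^E are complex^'n, whose norm is the Euclidean norm.\<close>

definition cadj :: "complex^'n^'m \<Rightarrow> complex^'m^'n" where
  "cadj A = (\<chi> i j. cnj (A $ j $ i))"

definition self_adjoint :: "complex^'n^'n \<Rightarrow> bool" where
  "self_adjoint A \<longleftrightarrow> cadj A = A"

definition herm_form :: "complex^'n^'n \<Rightarrow> complex^'n \<Rightarrow> complex" where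
  "herm_form M x = (\<Sum>i\<in>UNIV. cnj (x $ i) * (M *v x) $ i)"

definition loewner_le :: "complex^'n^'n \<Rightarrow> complex^'n^'n \<Rightarrow> bool" where
  "loewner_le A B \<longleftrightarrow> (\<forall>x. Im (herm_form (B - A) x) = 0 \<and> 0 \<le> Re (herm_form (B - A) x))"

definition opnorm :: "complex^'n^'n \<Rightarrow> real" where
  "opnorm A = onorm (\<lambda>x. A *v x)"

definition inv_opnorm :: "complex^'n^'n \<Rightarrow> ereal" where
  "inv_opnorm A = (if invertible A then ereal (opnorm (matrix_inv A)) else \<infinity>)"

end

theory Submission
  imports Defs
begin

definition cinner :: "complex^'n \<Rightarrow> complex^'n \<Rightarrow> complex" where
  "cinner x y = (\<Sum>i\<in>UNIV. cnj (x$i) * y$i)"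

lemma cinner_add_right: "cinner x (y + z) = cinner x y + cinner x z"
  by (simp add: cinner_def distrib_left sum.distrib)
lemma cinner_add_left: "cinner (x + y) z = cinner x z + cinner y z"
  by (simp add: cinner_def distrib_right sum.distrib)
lemma cinner_diff_right: "cinner x (y - z) = cinner x y - cinner x z"
  by (simp add: cinner_def right_diff_distrib sum_subtractf)
lemma cinner_diff_left: "cinner (x - y) z = cinner x z - cinner y z"
  by (simp add: cinner_def left_diff_distrib sum_subtractf)
lemma cinner_scale_right: "cinner x (a *s y) = a * cinner x y"
  by (simp add: cinner_def sum_distrib_left algebra_simps)
lemma cinner_scale_left: "cinner (a *s x) y = cnj a * cinner x y"
  by (simp add: cinner_def sum_distrib_left algebra_simps)
lemma cinner_zero_right[simp]: "cinner x 0 = 0" by (simp add: cinner_def)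
lemma cinner_zero_left[simp]: "cinner 0 x = 0" by (simp add: cinner_def)
lemma cinner_sum_right: "cinner x (\<Sum>b\<in>B. f b) = (\<Sum>b\<in>B. cinner x (f b))"
  by (induct B rule: infinite_finite_induct) (auto simp: cinner_add_right)
lemma cinner_sum_left: "cinner (\<Sum>b\<in>B. f b) x = (\<Sum>b\<in>B. cinner (f b) x)"
  by (induct B rule: infinite_finite_induct) (auto simp: cinner_add_left)
lemma cinner_cnj: "cnj (cinner x y) = cinner y x"
  by (simp add: cinner_def mult.commute)
lemma cinner_neg_right: "cinner x (- y) = - cinner x y"
  by (simp add: cinner_def sum_negf)
lemma cinner_neg_left: "cinner (- x) y = - cinner x y"
  by (simp add: cinner_def sum_negf)

lemma norm_sq_cinner: "(norm x)^2 = Re (cinner x x)"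
proof -
  have "(norm x)^2 = (\<Sum>i\<in>UNIV. (cmod (x$i))^2)"
    by (simp add: norm_vec_def L2_set_def sum_nonneg)
  also have "\<dots> = Re (cinner x x)"
    by (simp add: cinner_def; rule sum.cong; simp add: cmod_power2 flip: power2_eq_square)
  finally show ?thesis .
qed

lemma cinner_self_real: "cinner x x = of_real ((norm x)^2)"
proof -
  have "Im (cinner x x) = 0" by (simp add: cinner_def Im_sum)
  thus ?thesis by (simp add: norm_sq_cinner complex_eq_iff)
qed

lemma cinner_self_eq_0: "cinner x x = 0 \<longleftrightarrow> x = 0"
  by (simp add: cinner_self_real)

lemma cinner_matrix: "cinner x (M *v y) = cinner (cadj M *v x) y"
proof -
  have "cinner x (M *v y) = (\<Sum>i\<in>UNIV. \<Sum>j\<in>UNIV. cnj (x$i) * (M$i$j * y$j))"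
    by (simp add: cinner_def matrix_vector_mult_def sum_distrib_left)
  also have "\<dots> = (\<Sum>j\<in>UNIV. \<Sum>i\<in>UNIV. cnj (x$i) * (M$i$j * y$j))"
    by (rule sum.swap)
  also have "\<dots> = cinner (cadj M *v x) y"
    by (simp add: cinner_def matrix_vector_mult_def cadj_def sum_distrib_right; rule sum.cong; simp; rule sum.cong; simp_all add: algebra_simps)
  finally show ?thesis .
qed

lemma cinner_sa: "self_adjoint M \<Longrightarrow> cinner x (M *v y) = cinner (M *v x) y"
  by (simp add: cinner_matrix self_adjoint_def)

lemma herm_form_cinner: "herm_form M x = cinner x (M *v x)"
  by (simp add: herm_form_def cinner_def)

lemma herm_form_real: "self_adjoint M \<Longrightarrow> herm_form M x = of_real (Re (herm_form M x))"
proof -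
  assume "self_adjoint M"
  hence "cnj (herm_form M x) = herm_form M x"
    by (simp add: herm_form_cinner cinner_cnj cinner_sa)
  thus ?thesis by (metis Reals_cnj_iff complex_is_Real_iff of_real_Re)
qed

definition orthonormal :: "(complex^'n) set \<Rightarrow> bool" where
  "orthonormal B \<longleftrightarrow> (\<forall>b\<in>B. \<forall>b'\<in>B. cinner b b' = (if b = b' then 1 else 0))"

lemma orthonormal_subset: "orthonormal B \<Longrightarrow> C \<subseteq> B \<Longrightarrow> orthonormal C"
  unfolding orthonormal_def by blast

lemma orth_cinner_comb:
  assumes "finite B" "orthonormal B" "b \<in> B"
  shows "cinner b (\<Sum>b'\<in>B. f b' *s b') = f b"
proof -
  have "cinner b (\<Sum>b'\<in>B. f b' *s b') = (\<Sum>b'\<in>B. f b' * (if b = b' then 1 else 0))"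
    using assms by (auto simp: cinner_sum_right cinner_scale_right orthonormal_def intro!: sum.cong)
  also have "\<dots> = f b" using assms by (simp add: if_distrib sum.delta cong: if_cong)
  finally show ?thesis .
qed

lemma orth_cinner_sums:
  assumes "finite B" "orthonormal B"
  shows "cinner (\<Sum>b\<in>B. f b *s b) (\<Sum>b\<in>B. g b *s b) = (\<Sum>b\<in>B. cnj (f b) * g b)"
  using assms by (simp add: cinner_sum_left cinner_scale_left orth_cinner_comb)

lemma orth_independent:
  assumes "orthonormal B"
  shows "vec.independent B"
  unfolding vec.independent_explicit_finite_subsets
proof (intro allI impI ballI)
  fix S u v assume S: "S \<subseteq> B" "finite S" and sum: "(\<Sum>v\<in>S. u v *s v) = 0" and v: "v \<in> S"
  have o: "orthonormal S" using assms S orthonormal_subset by blast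
  have "u v = cinner v (\<Sum>v\<in>S. u v *s v)" using orth_cinner_comb[OF S(2) o v] by simp
  thus "u v = 0" using sum by simp
qed

lemma indep_card_le:
  assumes "vec.independent (B :: (complex^'n) set)"
  shows "finite B \<and> card B \<le> CARD('n)"
proof -
  have "finite B \<and> card B \<le> vec.dim B" using vec.independent_bound_general[OF assms] .
  moreover have "vec.dim B \<le> CARD('n)"
    using vec.dim_subset_UNIV[of B] by (simp add: card_cart_basis vec.dimension_def)
  ultimately show ?thesis by auto
qed

lemma mv_scale: "M *v (c *s x) = c *s (M *v (x::'a::comm_ring_1^'n))"
  by (simp add: vec_eq_iff matrix_vector_mult_def sum_distrib_left algebra_simps)

lemma mv_add: "M *v (x + y) = M *v x + M *v (y::'a::comm_ring_1^'n)"
  by (simp add: vec_eq_iff matrix_vector_mult_def sum.distrib algebra_simps)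

lemma quad_zero:
  fixes R C :: real
  assumes "\<And>t. 2 * t * R \<le> t^2 * C"
  shows "R = 0"
proof -
  define D where "D = \<bar>C\<bar> + 1"
  define t where "t = R / D"
  have p: "D > 0" by (simp add: D_def)
  have Dt: "D * t = R" using p by (simp add: t_def)
  have "2 * t * R \<le> t^2 * C" by (rule assms)
  hence "D^2 * (2 * t * R) \<le> D^2 * (t^2 * C)" by (rule mult_left_mono) simp
  moreover have "D^2 * (2 * t * R) = 2 * D * R * (D * t)" by (simp add: power2_eq_square algebra_simps)
  moreover have "D^2 * (t^2 * C) = (D * t)^2 * C" by (simp add: power2_eq_square algebra_simps)
  ultimately have "2 * D * R * R \<le> R * R * C" using Dt by (metis power2_eq_square mult.commute mult.assoc)
  hence "R * R * (2 * D - C) \<le> 0" by (simp add: algebra_simps)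
  moreover have "2 * D - C > 0" unfolding D_def by (cases "C \<ge> 0") auto
  ultimately have "R * R \<le> 0" by (simp add: mult_le_0_iff)
  thus ?thesis by (auto simp add: mult_le_0_iff)
qed

lemma continuous_quad: "continuous_on UNIV (\<lambda>x. Re (cinner x (M *v x)))"
  unfolding cinner_def matrix_vector_mult_def
  by (intro continuous_intros)

lemma continuous_cinner_right: "continuous_on UNIV (\<lambda>x. cinner b x)"
  unfolding cinner_def by (intro continuous_intros)

lemma norm_eq_1_cinner: "norm x = 1 \<longleftrightarrow> cinner x x = 1"
  by (metis cinner_self_real norm_ge_zero of_real_1 of_real_eq_iff power2_eq_1_iff
        abs_of_nonneg norm_one real_sqrt_abs)

lemma cinner_ofreal_scale: "cinner (of_real a *s x) (of_real a *s y) = of_real (a^2) * cinner x y"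
  by (simp add: cinner_scale_left cinner_scale_right power2_eq_square)

lemma eig_exists:
  fixes M :: "complex^'n^'n"
  assumes sa: "self_adjoint M"
    and BP: "\<forall>b\<in>B. M *v b = of_real (l b) *s b"
    and w0: "w0 \<noteq> 0" "\<forall>b\<in>B. cinner b w0 = 0"
  shows "\<exists>u. cinner u u = 1 \<and> (\<forall>b\<in>B. cinner b u = 0) \<and> M *v u = of_real (Re (herm_form M u)) *s u"
proof -
  define W where "W = {x. \<forall>b\<in>B. cinner b x = 0}"
  have Wadd: "x + y \<in> W" if "x \<in> W" "y \<in> W" for x y
    using that by (simp add: W_def cinner_add_right)
  have Wsc: "a *s x \<in> W" if "x \<in> W" for x a
    using that by (simp add: W_def cinner_scale_right)
  have Wdiff: "x - y \<in> W" if "x \<in> W" "y \<in> W" for x y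
    using that by (simp add: W_def cinner_diff_right)
  have Winv: "M *v x \<in> W" if "x \<in> W" for x
  proof -
    have "cinner b (M *v x) = 0" if "b \<in> B" for b
      using \<open>x \<in> W\<close> that BP by (simp add: cinner_sa[OF sa] cinner_scale_left W_def)
    thus ?thesis by (simp add: W_def)
  qed
  have closedW: "closed W"
  proof -
    have "W = (\<Inter>b\<in>B. {x. cinner b x = 0})" by (auto simp: W_def)
    moreover have "closed {x. cinner b x = 0}" for b
      using closed_Collect_eq[OF continuous_cinner_right continuous_on_const] .
    ultimately show ?thesis by auto
  qed
  define K where "K = sphere 0 1 \<inter> W"
  have cK: "compact K" unfolding K_def using closedW by (intro compact_Int_closed compact_sphere)
  define f where "f x = Re (cinner x (M *v x))" for x
  have fsc: "f (of_real a *s x) = a^2 * f x" for a x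
    by (simp add: f_def mv_scale cinner_ofreal_scale)
  have nsc: "(norm (of_real a *s x))^2 = a^2 * (norm x)^2" for a and x :: "complex^'n"
    by (simp add: norm_sq_cinner cinner_ofreal_scale)
  have w0W: "w0 \<in> W" using w0 by (simp add: W_def)
  define y0 where "y0 = of_real (1 / norm w0) *s w0"
  have "(norm y0)^2 = (1 / norm w0)^2 * (norm w0)^2" unfolding y0_def by (rule nsc)
  hence "(norm y0)^2 = 1" using w0 by (simp add: power_divide)
  hence "norm y0 = 1" using norm_ge_zero[of y0] by (simp add: power2_eq_1_iff)
  hence "y0 \<in> K" using Wsc[OF w0W] by (simp add: K_def y0_def)
  hence "K \<noteq> {}" by auto
  moreover have "continuous_on K f" unfolding f_def
    using continuous_on_subset[OF continuous_quad] by blast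
  ultimately obtain u where uK: "u \<in> K" and umax: "\<forall>y\<in>K. f y \<le> f u"
    using continuous_attains_sup[OF cK] by blast
  have uW: "u \<in> W" and un: "norm u = 1" using uK by (auto simp: K_def)
  have uu: "cinner u u = 1" using un norm_eq_1_cinner by blast
  define lam where "lam = f u"
  have bound: "f x \<le> lam * (norm x)^2" if "x \<in> W" for x
  proof (cases "x = 0")
    case True thus ?thesis by (simp add: f_def)
  next
    case False
    define y where "y = of_real (1 / norm x) *s x"
    have "(norm y)^2 = (1 / norm x)^2 * (norm x)^2" unfolding y_def by (rule nsc)
    hence "(norm y)^2 = 1" using False by (simp add: power_divide)
    hence "norm y = 1" using norm_ge_zero[of y] by (simp add: power2_eq_1_iff)
    hence "y \<in> K" using Wsc[OF that] by (simp add: K_def y_def)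
    hence "f y \<le> lam" using umax lam_def by auto
    moreover have "f y = (1 / norm x)^2 * f x" unfolding y_def by (rule fsc)
    ultimately have "f x / (norm x)^2 \<le> lam" by (simp add: power_divide)
    moreover have "(norm x)^2 > 0" using False by simp
    ultimately show ?thesis by (simp add: divide_le_eq)
  qed
  have orth: "cinner w (M *v u) = 0" if wW: "w \<in> W" and wu: "cinner u w = 0" for w
  proof -
    have key: "Re (cinner v (M *v u)) = 0" if vW: "v \<in> W" and vu: "cinner u v = 0" for v
    proof (rule quad_zero)
      fix t :: real
      define x where "x = u + of_real t *s v"
      have xW: "x \<in> W" unfolding x_def by (intro Wadd uW Wsc vW)
      have vu': "cinner v u = 0" using vu cinner_cnj[of u v] by simp
      have cross: "Re (cinner u (M *v v)) = Re (cinner v (M *v u))"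
      proof -
        have "cinner u (M *v v) = cnj (cinner v (M *v u))" by (simp add: cinner_sa[OF sa] cinner_cnj)
        thus ?thesis by simp
      qed
      have "cinner x (M *v x) = cinner u (M *v u) + of_real t * cinner u (M *v v)
          + of_real t * cinner v (M *v u) + of_real (t^2) * cinner v (M *v v)"
        by (simp add: x_def mv_add mv_scale cinner_add_left cinner_add_right cinner_scale_left
            cinner_scale_right power2_eq_square algebra_simps)
      hence fx: "f x = lam + 2 * t * Re (cinner v (M *v u)) + t^2 * f v"
        using cross by (simp add: f_def lam_def)
      have "cinner x x = cinner u u + of_real (t^2) * cinner v v"
        using vu vu' by (simp add: x_def cinner_add_left cinner_add_right cinner_scale_left
            cinner_scale_right power2_eq_square algebra_simps)
      hence nx: "(norm x)^2 = 1 + t^2 * (norm v)^2"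
        using uu by (simp add: norm_sq_cinner)
      have "f x \<le> lam * (norm x)^2" using bound[OF xW] .
      thus "2 * t * Re (cinner v (M *v u)) \<le> t^2 * (lam * (norm v)^2 - f v)"
        using fx nx by (simp add: algebra_simps)
    qed
    have r: "Re (cinner w (M *v u)) = 0" using key[OF wW wu] .
    have "Re (cinner (\<i> *s w) (M *v u)) = 0"
      using key[OF Wsc[OF wW]] wu by (simp add: cinner_scale_right)
    hence i: "Im (cinner w (M *v u)) = 0" by (simp add: cinner_scale_left)
    show ?thesis using r i by (simp add: complex_eq_iff)
  qed
  define w where "w = M *v u - cinner u (M *v u) *s u"
  have wW: "w \<in> W" unfolding w_def by (intro Wdiff Winv uW Wsc)
  have wu: "cinner u w = 0" using uu by (simp add: w_def cinner_diff_right cinner_scale_right)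
  have wu': "cinner w u = 0" using wu cinner_cnj[of u w] by simp
  have "cinner w w = cinner w (M *v u) - cinner u (M *v u) * cinner w u"
    by (simp add: w_def cinner_diff_right cinner_scale_right)
  also have "\<dots> = 0" using orth[OF wW wu] wu' by simp
  finally have "w = 0" by (simp add: cinner_self_eq_0)
  hence "M *v u = cinner u (M *v u) *s u" by (simp add: w_def)
  also have "cinner u (M *v u) = of_real (Re (herm_form M u))"
    using herm_form_real[OF sa, of u] by (simp add: herm_form_cinner)
  finally have "M *v u = of_real (Re (herm_form M u)) *s u" .
  moreover have "\<forall>b\<in>B. cinner b u = 0" using uW by (simp add: W_def)
  ultimately show ?thesis using uu by blast
qed

lemma spectral:
  fixes M :: "complex^'n^'n"
  assumes sa: "self_adjoint M"
  shows "\<exists>B. finite B \<and> orthonormal B \<and> (\<forall>b\<in>B. M *v b = of_real (Re (herm_form M b)) *s b)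
            \<and> (\<forall>z. z = (\<Sum>b\<in>B. cinner b z *s b))"
proof -
  define P where "P B \<longleftrightarrow> orthonormal B \<and> (\<forall>b\<in>B. M *v b = of_real (Re (herm_form M b)) *s b)" for B
  have Pfin: "finite B \<and> card B \<le> CARD('n)" if "P B" for B
    using that unfolding P_def by (intro indep_card_le orth_independent) simp
  have "P {}" by (simp add: P_def orthonormal_def)
  hence "\<exists>k. \<exists>B. P B \<and> card B = k" by blast
  then obtain k0 where ex: "\<exists>B. P B \<and> card B = k0" by blast
  have bnd: "\<forall>k'. (\<exists>B. P B \<and> card B = k') \<longrightarrow> k' \<le> CARD('n)" using Pfin by blast
  obtain k where "\<exists>B. P B \<and> card B = k" and kmax: "\<forall>k'. (\<exists>B. P B \<and> card B = k') \<longrightarrow> k' \<le> k"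
    using Nat.ex_has_greatest_nat[of "\<lambda>k. \<exists>B. P B \<and> card B = k", OF ex bnd] by blast
  then obtain B where PB: "P B" and cB: "card B = k" by blast
  have fB: "finite B" using Pfin[OF PB] by simp
  have oB: "orthonormal B" using PB by (simp add: P_def)
  have complete: "z = (\<Sum>b\<in>B. cinner b z *s b)" for z
  proof (rule ccontr)
    assume ne: "z \<noteq> (\<Sum>b\<in>B. cinner b z *s b)"
    define w0 where "w0 = z - (\<Sum>b\<in>B. cinner b z *s b)"
    have "w0 \<noteq> 0" using ne by (simp add: w0_def)
    moreover have "\<forall>b\<in>B. cinner b w0 = 0"
      using orth_cinner_comb[OF fB oB] by (simp add: w0_def cinner_diff_right)
    ultimately obtain u where uu: "cinner u u = 1" and ub: "\<forall>b\<in>B. cinner b u = 0"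
      and ue: "M *v u = of_real (Re (herm_form M u)) *s u"
      using eig_exists[OF sa, of B "\<lambda>b. Re (herm_form M b)" w0] PB by (auto simp: P_def)
    have uB: "u \<notin> B" using uu ub by force
    have "P (insert u B)"
    proof -
      have ub': "\<forall>b\<in>B. cinner u b = 0"
        using ub by (metis cinner_cnj complex_cnj_zero)
      have "orthonormal (insert u B)"
        using oB uu ub ub' uB unfolding orthonormal_def by auto
      thus ?thesis using PB ue by (simp add: P_def)
    qed
    hence "card (insert u B) \<le> k" using kmax by blast
    thus False using uB fB cB by simp
  qed
  show ?thesis using fB oB PB complete by (auto simp: P_def)
qed

lemma mv_sum: "M *v (\<Sum>b\<in>S. f b) = (\<Sum>b\<in>S. M *v f b)" for M :: "'a::comm_ring_1^'n^'m"
  by (induct S rule: infinite_finite_induct) (simp_all add: mv_add)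

lemma cmod_sq: "cnj a * a = of_real ((cmod a)^2)"
  by (metis complex_norm_square mult.commute of_real_power)

lemma cmod_sq1: "cnj x * (x * of_real l) = of_real (l * (cmod x)^2)"
proof -
  have "cnj x * (x * of_real l) = (cnj x * x) * of_real l" by (simp only: mult.assoc)
  also have "\<dots> = of_real ((cmod x)^2 * l)" by (simp only: cmod_sq of_real_mult)
  finally show ?thesis by (simp only: mult.commute)
qed

lemma cmod_sq2: "cnj (x * of_real l) * (x * of_real l) = of_real (l^2 * (cmod x)^2)"
proof -
  have "cnj (x * of_real l) * (x * of_real l) = (cnj x * x) * (of_real l * of_real l)"
    by (simp add: ac_simps)
  also have "\<dots> = of_real ((cmod x)^2 * (l * l))" by (simp only: cmod_sq of_real_mult)
  finally show ?thesis by (simp add: power2_eq_square ac_simps)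
qed

lemma comb_facts:
  fixes M :: "complex^'n^'n"
  assumes fS: "finite S" and oS: "orthonormal S" and eS: "\<forall>b\<in>S. M *v b = of_real (lam b) *s b"
    and z: "z = (\<Sum>b\<in>S. g b *s b)"
  shows "Re (herm_form M z) = (\<Sum>b\<in>S. lam b * (cmod (g b))^2)"
    and "(norm z)^2 = (\<Sum>b\<in>S. (cmod (g b))^2)"
    and "(norm (M *v z))^2 = (\<Sum>b\<in>S. (lam b)^2 * (cmod (g b))^2)"
proof -
  have Mz: "M *v z = (\<Sum>b\<in>S. (g b * of_real (lam b)) *s b)"
    using eS by (auto simp: z mv_sum mv_scale intro!: sum.cong)
  have "herm_form M z = (\<Sum>b\<in>S. cnj (g b) * (g b * of_real (lam b)))"
    unfolding herm_form_cinner Mz using orth_cinner_sums[OF fS oS] by (simp add: z)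
  also have "\<dots> = (\<Sum>b\<in>S. of_real (lam b * (cmod (g b))^2))"
    by (rule sum.cong) (simp_all only: cmod_sq1)
  finally show "Re (herm_form M z) = (\<Sum>b\<in>S. lam b * (cmod (g b))^2)"
    by (simp add: Re_sum)
  have "cinner z z = (\<Sum>b\<in>S. of_real ((cmod (g b))^2))"
    using orth_cinner_sums[OF fS oS] by (simp add: z cmod_sq)
  thus "(norm z)^2 = (\<Sum>b\<in>S. (cmod (g b))^2)"
    by (simp add: norm_sq_cinner Re_sum)
  have "cinner (M *v z) (M *v z) = (\<Sum>b\<in>S. cnj (g b * of_real (lam b)) * (g b * of_real (lam b)))"
    unfolding Mz using orth_cinner_sums[OF fS oS] by simp
  also have "\<dots> = (\<Sum>b\<in>S. of_real ((lam b)^2 * (cmod (g b))^2))"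
    by (rule sum.cong) (simp_all only: cmod_sq2)
  finally show "(norm (M *v z))^2 = (\<Sum>b\<in>S. (lam b)^2 * (cmod (g b))^2)"
    by (simp add: norm_sq_cinner Re_sum)
qed

definition good_le :: "complex^'n^'n \<Rightarrow> real \<Rightarrow> (complex^'n) set \<Rightarrow> bool" where
  "good_le M c L \<longleftrightarrow> vec.independent L \<and> (\<forall>z\<in>vec.span L. Re (herm_form M z) \<le> c * (norm z)^2)"

definition good_lt :: "complex^'n^'n \<Rightarrow> real \<Rightarrow> (complex^'n) set \<Rightarrow> bool" where
  "good_lt M c L \<longleftrightarrow> vec.independent L \<and> (\<forall>z\<in>vec.span L. z \<noteq> 0 \<longrightarrow> Re (herm_form M z) < - c * (norm z)^2)"

lemma key_a:
  fixes M :: "complex^'n^'n"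
  assumes sa: "self_adjoint M" and v: "v \<noteq> 0" and Mv: "norm (M *v v) \<le> c * norm v"
  shows "\<exists>L. good_le M c L \<and> (\<forall>L'. good_lt M c L' \<longrightarrow> card L' < card L)"
proof -
  obtain B where fB: "finite B" and oB: "orthonormal B"
    and eB: "\<forall>b\<in>B. M *v b = of_real (Re (herm_form M b)) *s b"
    and cB: "\<And>z. z = (\<Sum>b\<in>B. cinner b z *s b)"
    using spectral[OF sa] by blast
  define lam where "lam b = Re (herm_form M b)" for b
  have eB': "\<forall>b\<in>B. M *v b = of_real (lam b) *s b" using eB by (simp add: lam_def)
  define Bl where "Bl = {b\<in>B. lam b \<le> c}"
  define Bn where "Bn = {b\<in>B. lam b < - c}"
  have fBl: "finite Bl" and fBn: "finite Bn" using fB by (simp_all add: Bl_def Bn_def)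
  have oBl: "orthonormal Bl" and oBn: "orthonormal Bn"
    using oB by (auto simp: Bl_def Bn_def intro: orthonormal_subset)
  have eBl: "\<forall>b\<in>Bl. M *v b = of_real (lam b) *s b" using eB' by (simp add: Bl_def)
  have nv: "norm v > 0" using v by simp
  have c0: "c \<ge> 0"
  proof (rule ccontr)
    assume "\<not> c \<ge> 0"
    hence "c * norm v < 0" using nv by (simp add: mult_neg_pos)
    thus False using Mv norm_ge_zero[of "M *v v"] by linarith
  qed
  have ex: "\<exists>b\<in>B. \<bar>lam b\<bar> \<le> c"
  proof (rule ccontr)
    assume "\<not> ?thesis"
    hence big: "\<forall>b\<in>B. \<bar>lam b\<bar> > c" by auto
    define a where "a b = cinner b v" for b
    have nv2: "(norm v)^2 = (\<Sum>b\<in>B. (cmod (a b))^2)"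
      using comb_facts(2)[OF fB oB eB' cB[of v]] by (simp add: a_def)
    have nMv2: "(norm (M *v v))^2 = (\<Sum>b\<in>B. (lam b)^2 * (cmod (a b))^2)"
      using comb_facts(3)[OF fB oB eB' cB[of v]] by (simp add: a_def)
    have "\<exists>b\<in>B. a b \<noteq> 0"
    proof (rule ccontr)
      assume "\<not> ?thesis"
      hence "(norm v)^2 = 0" using nv2 by simp
      thus False using nv by simp
    qed
    then obtain b0 where b0: "b0 \<in> B" "a b0 \<noteq> 0" by blast
    have "(\<Sum>b\<in>B. c^2 * (cmod (a b))^2) < (\<Sum>b\<in>B. (lam b)^2 * (cmod (a b))^2)"
    proof (rule sum_strict_mono_ex1[OF fB])
      show "\<forall>b\<in>B. c^2 * (cmod (a b))^2 \<le> (lam b)^2 * (cmod (a b))^2"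
      proof
        fix b assume "b \<in> B"
        hence "c^2 \<le> (lam b)^2" using big c0 by (metis abs_le_square_iff less_imp_le abs_of_nonneg)
        thus "c^2 * (cmod (a b))^2 \<le> (lam b)^2 * (cmod (a b))^2" by (simp add: mult_right_mono)
      qed
      have "c^2 < (lam b0)^2" using big b0 c0 by (metis abs_of_nonneg abs_le_square_iff not_less)
      moreover have "(cmod (a b0))^2 > 0" using b0 by simp
      ultimately show "\<exists>b\<in>B. c^2 * (cmod (a b))^2 < (lam b)^2 * (cmod (a b))^2"
        using b0 by (intro bexI[of _ b0]) (simp_all add: mult_strict_right_mono)
    qed
    hence "c^2 * (norm v)^2 < (norm (M *v v))^2"
      by (simp add: nv2 nMv2 sum_distrib_left)
    moreover have "(norm (M *v v))^2 \<le> (c * norm v)^2"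
      using Mv by (simp add: power_mono)
    ultimately show False by (simp add: power_mult_distrib)
  qed
  have gBl: "good_le M c Bl"
    unfolding good_le_def
  proof
    show "vec.independent Bl" by (rule orth_independent[OF oBl])
    show "\<forall>z\<in>vec.span Bl. Re (herm_form M z) \<le> c * (norm z)^2"
    proof
      fix z assume "z \<in> vec.span Bl"
      then obtain g where z: "z = (\<Sum>b\<in>Bl. g b *s b)" using vec.span_finite[OF fBl] by auto
      have "Re (herm_form M z) = (\<Sum>b\<in>Bl. lam b * (cmod (g b))^2)"
        by (rule comb_facts(1)[OF fBl oBl eBl z])
      also have "\<dots> \<le> (\<Sum>b\<in>Bl. c * (cmod (g b))^2)"
        by (rule sum_mono) (simp add: Bl_def mult_right_mono)
      also have "\<dots> = c * (norm z)^2"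
        using comb_facts(2)[OF fBl oBl eBl z] by (simp add: sum_distrib_left)
      finally show "Re (herm_form M z) \<le> c * (norm z)^2" .
    qed
  qed
  have bnd: "card L' \<le> card Bn" if gL: "good_lt M c L'" for L'
  proof -
    define pi where "pi z = (\<Sum>b\<in>Bn. cinner b z *s b)" for z
    have lin: "Vector_Spaces.linear (*s) (*s) pi"
      unfolding Vector_Spaces.linear_iff
      by (simp add: vec.vector_space_axioms pi_def cinner_add_right cinner_scale_right
          scaleR_right_distrib sum.distrib vector_add_ldistrib scalar_mult_eq_scaleR
          vector_smult_assoc vec.scale_sum_right)
    have indL: "vec.independent L'" using gL by (simp add: good_lt_def)
    have fL: "finite L'" using indep_card_le[OF indL] by simp
    have kern: "z = 0" if zs: "z \<in> vec.span L'" and pz: "pi z = 0" for z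
    proof (rule ccontr)
      assume z0: "z \<noteq> 0"
      have cz: "cinner b z = 0" if "b \<in> Bn" for b
        using orth_cinner_comb[OF fBn oBn that, of "\<lambda>b. cinner b z"] pz by (simp add: pi_def)
      have ge: "\<forall>b\<in>B. - c * (cmod (cinner b z))^2 \<le> lam b * (cmod (cinner b z))^2"
      proof
        fix b assume bB: "b \<in> B"
        show "- c * (cmod (cinner b z))^2 \<le> lam b * (cmod (cinner b z))^2"
        proof (cases "lam b < - c")
          case True
          hence "cinner b z = 0" using cz bB by (simp add: Bn_def)
          thus ?thesis by simp
        next
          case False
          thus ?thesis using mult_right_mono[of "-c" "lam b" "(cmod (cinner b z))^2"] by simp
        qed
      qed
      have "Re (herm_form M z) = (\<Sum>b\<in>B. lam b * (cmod (cinner b z))^2)"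
        by (rule comb_facts(1)[OF fB oB eB' cB])
      moreover have "(norm z)^2 = (\<Sum>b\<in>B. (cmod (cinner b z))^2)"
        by (rule comb_facts(2)[OF fB oB eB' cB])
      ultimately have "- c * (norm z)^2 \<le> Re (herm_form M z)"
        using sum_mono[OF ge[rule_format]] by (simp add: sum_distrib_left)
      moreover have "Re (herm_form M z) < - c * (norm z)^2"
        using gL zs z0 by (simp add: good_lt_def)
      ultimately show False by linarith
    qed
    have inj: "inj_on pi (vec.span L')"
      using vec.linear_inj_on_iff_eq_0[OF lin vec.subspace_span] kern by blast
    have "vec.independent (pi ` L')"
      by (rule vec.linear_independent_injective_image[OF lin indL inj])
    moreover have "pi ` L' \<subseteq> vec.span Bn"
    proof -
      have "pi z \<in> vec.span Bn" for z
        unfolding pi_def by (rule vec.span_sum) (auto intro: vec.span_scale vec.span_base)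
      thus ?thesis by auto
    qed
    ultimately have "card (pi ` L') \<le> card Bn"
      using vec.independent_span_bound[OF fBn] by blast
    moreover have "card (pi ` L') = card L'"
      using inj vec.span_superset by (intro card_image) (auto intro: inj_on_subset)
    ultimately show ?thesis by simp
  qed
  have lt: "card Bn < card Bl"
  proof (rule psubset_card_mono[OF fBl])
    obtain b where "b \<in> B" "\<bar>lam b\<bar> \<le> c" using ex by blast
    hence b: "b \<in> Bl" "b \<notin> Bn" by (auto simp: Bl_def Bn_def)
    have "Bn \<subseteq> Bl" using c0 by (auto simp: Bl_def Bn_def)
    thus "Bn \<subset> Bl" using b by blast
  qed
  have "\<forall>L'. good_lt M c L' \<longrightarrow> card L' < card Bl"
  proof (intro allI impI)
    fix L' assume "good_lt M c L'"
    thus "card L' < card Bl" using bnd[of L'] lt by linarith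
  qed
  thus ?thesis by (intro exI[of _ Bl] conjI gBl)
qed

lemma key_b:
  assumes "good_le M2 c L" and "\<forall>z. Re (herm_form M1 z) \<le> Re (herm_form M2 z) - d * (norm z)^2"
    and "d > 2 * c"
  shows "good_lt M1 c L"
  unfolding good_lt_def
proof
  show "vec.independent L" using assms(1) by (simp add: good_le_def)
  show "\<forall>z\<in>vec.span L. z \<noteq> 0 \<longrightarrow> Re (herm_form M1 z) < - c * (norm z)^2"
  proof (intro ballI impI)
    fix z assume zs: "z \<in> vec.span L" and "z \<noteq> 0"
    hence p: "(norm z)^2 > 0" by simp
    have "Re (herm_form M2 z) \<le> c * (norm z)^2" using assms(1) zs by (simp add: good_le_def)
    moreover have "0 < (d - 2 * c) * (norm z)^2" using assms(3) p by (intro mult_pos_pos) simp_all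
    hence "0 < d * (norm z)^2 - 2 * (c * (norm z)^2)" by (simp add: left_diff_distrib mult.assoc)
    ultimately show "Re (herm_form M1 z) < - c * (norm z)^2" using assms(2)[rule_format, of z] by linarith
  qed
qed

fun sep :: "real \<Rightarrow> real list \<Rightarrow> bool" where
  "sep d [] = True"
| "sep d [x] = True"
| "sep d (x # y # ys) = (y - x > d \<and> sep d (y # ys))"

lemma emeasure_lebesgue_Icc: "a \<le> b \<Longrightarrow> emeasure lebesgue {a..b::real} = ennreal (b - a)"
  by (simp add: emeasure_completion)

lemma lebesgue_openI: "open (A::real set) \<Longrightarrow> A \<in> sets lebesgue"
  by (intro sets_completionI_sets) (simp add: borel_open)

lemma lebesgue_closedI: "closed (A::real set) \<Longrightarrow> A \<in> sets lebesgue"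
  by (intro sets_completionI_sets) (simp add: borel_closed)

lemma measure_sep_aux:
  fixes S :: "real set" and d :: real
  assumes "d \<ge> 0"
  shows "S \<in> sets lebesgue \<Longrightarrow> (\<forall>xs. sep d xs \<and> set xs \<subseteq> S \<longrightarrow> length xs \<le> n)
          \<Longrightarrow> emeasure lebesgue (S \<inter> {t..}) \<le> ennreal (real n * d)"
proof (induction n arbitrary: S t)
  case 0
  have "S = {}"
  proof (rule ccontr)
    assume "S \<noteq> {}"
    then obtain x where x: "x \<in> S" by blast
    have "length [x] \<le> 0" using 0(2)[rule_format, of "[x]"] x by simp
    thus False by simp
  qed
  thus ?case by simp
next
  case (Suc n)
  let ?St = "S \<inter> {t..}"
  show ?case
  proof (cases "?St = {}")
    case True thus ?thesis by simp
  next
    case False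
    define a where "a = Inf ?St"
    have bdd: "bdd_below ?St" by (rule bdd_belowI[of _ t]) auto
    have ale: "a \<le> x" if "x \<in> ?St" for x using cInf_lower[OF that bdd] a_def by simp
    define S' where "S' = S \<inter> {a + d<..}"
    have S'm: "S' \<in> sets lebesgue" using Suc.prems(1) lebesgue_openI[of "{a + d<..}"]
      by (simp add: S'_def sets.Int)
    have S'p: "\<forall>xs. sep d xs \<and> set xs \<subseteq> S' \<longrightarrow> length xs \<le> n"
    proof (intro allI impI)
      fix xs assume h: "sep d xs \<and> set xs \<subseteq> S'"
      show "length xs \<le> n"
      proof (cases xs)
        case Nil thus ?thesis by simp
      next
        case (Cons x1 rest)
        have "x1 \<in> S'" using h Cons by simp
        hence x1: "x1 > a + d" "x1 \<in> S" by (auto simp: S'_def)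
        have "Inf ?St < x1 - d" using x1 a_def by simp
        then obtain s where s: "s \<in> ?St" "s < x1 - d" using cInf_less_iff[OF False bdd] by blast
        have "sep d (s # xs)" using h s Cons by simp
        moreover have "set (s # xs) \<subseteq> S" using h s by (auto simp: S'_def)
        ultimately have "length (s # xs) \<le> Suc n" using Suc.prems(2) by blast
        thus ?thesis by simp
      qed
    qed
    have IH: "emeasure lebesgue (S' \<inter> {a + d..}) \<le> ennreal (real n * d)"
      using Suc.IH[OF S'm S'p] .
    have "S' \<inter> {a + d..} = S'" by (auto simp: S'_def)
    hence IH': "emeasure lebesgue S' \<le> ennreal (real n * d)" using IH by simp
    have sub: "?St \<subseteq> {a..a+d} \<union> S'" using ale by (auto simp: S'_def)
    have "emeasure lebesgue ?St \<le> emeasure lebesgue ({a..a+d} \<union> S')"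
      using S'm by (intro emeasure_mono[OF sub]) auto
    also have "\<dots> \<le> emeasure lebesgue {a..a+d} + emeasure lebesgue S'"
      using S'm by (intro emeasure_subadditive) auto
    also have "\<dots> \<le> ennreal d + ennreal (real n * d)"
      using IH' assms by (intro add_mono) (simp_all add: emeasure_lebesgue_Icc)
    also have "\<dots> = ennreal (real (Suc n) * d)"
      using assms by (simp add: ennreal_plus[symmetric] algebra_simps del: ennreal_plus)
    finally show ?thesis .
  qed
qed

lemma measure_sep:
  fixes S :: "real set" and d :: real
  assumes "d \<ge> 0" "S \<in> sets lebesgue" "\<forall>xs. sep d xs \<and> set xs \<subseteq> S \<longrightarrow> length xs \<le> n"
  shows "emeasure lebesgue S \<le> ennreal (real n * d)"
proof -
  define A where "A k = S \<inter> {- real k..}" for k :: nat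
  have "range A \<subseteq> sets lebesgue" using assms(2) by (auto simp: A_def)
  moreover have "incseq A" by (auto simp: A_def incseq_def)
  ultimately have eq: "(SUP k. emeasure lebesgue (A k)) = emeasure lebesgue (\<Union>k. A k)"
    by (rule SUP_emeasure_incseq)
  have un: "(\<Union>k. A k) = S"
  proof -
    have "x \<in> (\<Union>k. A k)" if "x \<in> S" for x
    proof -
      obtain k :: nat where "real k \<ge> - x" using real_arch_simple by blast
      hence "x \<in> A k" using that by (auto simp: A_def)
      thus ?thesis by blast
    qed
    thus ?thesis by (auto simp: A_def)
  qed
  have le: "emeasure lebesgue (A k) \<le> ennreal (real n * d)" for k
    unfolding A_def by (rule measure_sep_aux[OF assms(1) assms(2) assms(3)])
  have "(SUP k. emeasure lebesgue (A k)) \<le> ennreal (real n * d)"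
    by (rule SUP_least) (rule le)
  thus ?thesis using eq un by simp
qed

lemma good_lt_empty: "good_lt M c {}"
  by (simp add: good_lt_def vec.independent_empty)

lemma chain:
  fixes Mf :: "real \<Rightarrow> complex^'n^'n"
  assumes sa: "\<And>\<xi>. self_adjoint (Mf \<xi>)"
    and mono: "\<And>\<xi> \<eta> z. \<xi> \<le> \<eta> \<Longrightarrow> Re (herm_form (Mf \<xi>) z) + \<beta> * (\<eta> - \<xi>) * (norm z)^2 \<le> Re (herm_form (Mf \<eta>) z)"
    and bp: "\<beta> > 0"
    and T: "\<And>\<xi>. \<xi> \<in> S \<Longrightarrow> \<exists>v. v \<noteq> 0 \<and> norm (Mf \<xi> *v v) \<le> c * norm v"
    and c0': "c \<ge> 0"
  shows "sep (2 * c / \<beta>) (x # xs) \<Longrightarrow> set (x # xs) \<subseteq> S \<Longrightarrow> \<exists>L. good_le (Mf x) c L \<and> length (x # xs) \<le> card L"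
proof (induction xs arbitrary: x)
  case Nil
  have xS: "x \<in> S" using Nil.prems(2) by simp
  obtain v where v1: "v \<noteq> 0" and v2: "norm (Mf x *v v) \<le> c * norm v" using T[OF xS] by blast
  obtain L where L1: "good_le (Mf x) c L" and L2: "\<forall>L'. good_lt (Mf x) c L' \<longrightarrow> card L' < card L"
    using key_a[OF sa v1 v2] by blast
  have "card ({}::(complex^'n) set) < card L" using L2 good_lt_empty by blast
  hence "length [x] \<le> card L" by simp
  thus ?case using L1 by blast
next
  case (Cons y ys)
  have sy: "sep (2 * c / \<beta>) (y # ys)" and yx: "y - x > 2 * c / \<beta>" using Cons.prems(1) by auto
  obtain Ly where gy: "good_le (Mf y) c Ly" and ly: "length (y # ys) \<le> card Ly"
    using Cons.IH[OF sy] Cons.prems(2) by auto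
  have "\<beta> * (y - x) > 2 * c" using yx bp by (simp add: field_simps)
  moreover have "\<forall>z. Re (herm_form (Mf x) z) \<le> Re (herm_form (Mf y) z) - \<beta> * (y - x) * (norm z)^2"
  proof
    fix z
    have "x \<le> y" using yx bp c0' by (smt (verit) divide_nonneg_pos)
    thus "Re (herm_form (Mf x) z) \<le> Re (herm_form (Mf y) z) - \<beta> * (y - x) * (norm z)^2"
      using mono[of x y z] by linarith
  qed
  ultimately have "good_lt (Mf x) c Ly"
    using key_b[OF gy] by blast
  moreover have xS: "x \<in> S" using Cons.prems(2) by simp
  obtain v where v1: "v \<noteq> 0" and v2: "norm (Mf x *v v) \<le> c * norm v"
    using T[OF xS] by blast
  obtain L where L1: "good_le (Mf x) c L" and L2: "\<forall>L'. good_lt (Mf x) c L' \<longrightarrow> card L' < card L"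
    using key_a[OF sa v1 v2] by blast
  ultimately have "card Ly < card L" by blast
  hence "length (x # y # ys) \<le> card L" using ly by simp
  thus ?case using L1 by blast
qed

lemma abstract_main:
  fixes Mf :: "real \<Rightarrow> complex^'n^'n"
  assumes sa: "\<And>\<xi>. self_adjoint (Mf \<xi>)"
    and mono: "\<And>\<xi> \<eta> z. \<xi> \<le> \<eta> \<Longrightarrow> Re (herm_form (Mf \<xi>) z) + \<beta> * (\<eta> - \<xi>) * (norm z)^2 \<le> Re (herm_form (Mf \<eta>) z)"
    and bp: "\<beta> > 0" and c0: "c \<ge> 0"
    and Sm: "S \<in> sets lebesgue"
    and T: "\<And>\<xi>. \<xi> \<in> S \<Longrightarrow> \<exists>v. v \<noteq> 0 \<and> norm (Mf \<xi> *v v) \<le> c * norm v"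
  shows "emeasure lebesgue S \<le> ennreal (real CARD('n) * (2 * c / \<beta>))"
proof (rule measure_sep[OF _ Sm])
  show "2 * c / \<beta> \<ge> 0" using bp c0 by simp
  show "\<forall>xs. sep (2 * c / \<beta>) xs \<and> set xs \<subseteq> S \<longrightarrow> length xs \<le> CARD('n)"
  proof (intro allI impI)
    fix xs assume h: "sep (2 * c / \<beta>) xs \<and> set xs \<subseteq> S"
    show "length xs \<le> CARD('n)"
    proof (cases xs)
      case Nil thus ?thesis by simp
    next
      case (Cons x rest)
      then obtain L where "good_le (Mf x) c L" "length xs \<le> card L"
        using chain[OF sa mono bp T c0, where x=x and xs=rest] h by auto
      moreover have "card L \<le> CARD('n)"
        using calculation(1) indep_card_le by (auto simp: good_le_def)
      ultimately show ?thesis by simp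
    qed
  qed
qed

definition Kn :: "complex^'n^'n \<Rightarrow> real" where
  "Kn M = (\<Sum>i\<in>UNIV. \<Sum>j\<in>UNIV. cmod (M$i$j))"

lemma Kn_bound: "norm (M *v x) \<le> Kn M * norm x"
proof -
  have "norm (M *v x) \<le> (\<Sum>i\<in>UNIV. norm ((M *v x)$i))"
    unfolding norm_vec_def by (rule L2_set_le_sum) simp
  also have "\<dots> \<le> (\<Sum>i\<in>UNIV. \<Sum>j\<in>UNIV. cmod (M$i$j) * norm x)"
  proof (rule sum_mono)
    fix i
    have "norm ((M *v x)$i) = norm (\<Sum>j\<in>UNIV. M$i$j * x$j)"
      by (simp add: matrix_vector_mult_def)
    also have "\<dots> \<le> (\<Sum>j\<in>UNIV. norm (M$i$j * x$j))" by (rule norm_sum)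
    also have "\<dots> \<le> (\<Sum>j\<in>UNIV. cmod (M$i$j) * norm x)"
      by (rule sum_mono) (simp add: norm_mult mult_left_mono Finite_Cartesian_Product.norm_nth_le)
    finally show "norm ((M *v x)$i) \<le> (\<Sum>j\<in>UNIV. cmod (M$i$j) * norm x)" .
  qed
  also have "\<dots> = Kn M * norm x" by (simp add: Kn_def sum_distrib_right)
  finally show ?thesis .
qed

lemma Kn_minus_commute: "Kn (M - N) = Kn (N - M)"
  unfolding Kn_def by (simp add: norm_minus_commute)

definition smin :: "complex^'n^'n \<Rightarrow> real" where
  "smin M = Inf ((\<lambda>x. norm (M *v x)) ` sphere 0 1)"

lemma sphere_ne: "sphere (0::complex^'n) 1 \<noteq> {}"
proof -
  obtain x :: "complex^'n" where "norm x = 1" using vector_choose_size[of 1] by auto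
  thus ?thesis by auto
qed

lemma smin_bdd: "bdd_below ((\<lambda>x. norm (M *v x)) ` sphere 0 1)"
  by (rule bdd_belowI[of _ 0]) auto

lemma smin_le: "norm x = 1 \<Longrightarrow> smin M \<le> norm (M *v x)"
  unfolding smin_def by (rule cInf_lower[OF _ smin_bdd]) auto

lemma smin_ge: "(\<And>x. norm x = 1 \<Longrightarrow> s \<le> norm (M *v x)) \<Longrightarrow> s \<le> smin M"
  unfolding smin_def using sphere_ne by (intro cInf_greatest) auto

lemma smin_less:
  assumes "smin M < t"
  shows "\<exists>x. norm x = 1 \<and> norm (M *v x) < t"
proof -
  have ne: "(\<lambda>x. norm (M *v x)) ` sphere 0 1 \<noteq> {}" using sphere_ne by simp
  have "\<exists>y\<in>(\<lambda>x. norm (M *v x)) ` sphere 0 1. y < t"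
    using assms cInf_less_iff[OF ne smin_bdd] unfolding smin_def by blast
  thus ?thesis by auto
qed

lemma smin_lip:
  fixes M N :: "complex^'n^'n"
  shows "smin M \<le> smin N + Kn (M - N)"
proof -
  have "smin M - Kn (M - N) \<le> smin N"
  proof (rule smin_ge)
    fix x :: "complex^'n" assume x: "norm x = 1"
    have "smin M \<le> norm (M *v x)" by (rule smin_le[OF x])
    also have "M *v x = N *v x + (M - N) *v x" by (simp add: matrix_vector_mult_diff_rdistrib)
    also have "norm \<dots> \<le> norm (N *v x) + norm ((M - N) *v x)" by (rule norm_triangle_ineq)
    also have "norm ((M - N) *v x) \<le> Kn (M - N)" using Kn_bound[of "M - N" x] x by simp
    finally show "smin M - Kn (M - N) \<le> norm (N *v x)" by simp
  qed
  thus ?thesis by simp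
qed

lemma smin_abs:
  fixes M N :: "complex^'n^'n"
  shows "\<bar>smin M - smin N\<bar> \<le> Kn (M - N)"
  using smin_lip[of M N] smin_lip[of N M] Kn_minus_commute[of M N] by linarith

lemma Kn_cont: "continuous_on UNIV A \<Longrightarrow> continuous_on UNIV (\<lambda>t. Kn (A t - C))"
  unfolding Kn_def by (intro continuous_intros) auto

lemma smin_cont:
  fixes A :: "real \<Rightarrow> complex^'n^'n"
  assumes "continuous_on UNIV A"
  shows "continuous_on UNIV (\<lambda>t. smin (A t))"
proof (rule continuous_at_imp_continuous_on, intro ballI)
  fix t0 :: real
  have c: "continuous_on UNIV (\<lambda>t. Kn (A t - A t0))" by (rule Kn_cont[OF assms])
  hence "isCont (\<lambda>t. Kn (A t - A t0)) t0" using continuous_on_eq_continuous_at open_UNIV by blast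
  hence g0: "((\<lambda>t. Kn (A t - A t0)) \<longlongrightarrow> 0) (at t0)" by (simp add: isCont_def Kn_def)
  have "((\<lambda>t. smin (A t) - smin (A t0)) \<longlongrightarrow> 0) (at t0)"
    by (rule Lim_null_comparison[OF _ g0]) (simp add: smin_abs)
  hence "((\<lambda>t. smin (A t)) \<longlongrightarrow> smin (A t0)) (at t0)" by (rule LIM_zero_cancel)
  thus "isCont (\<lambda>t. smin (A t)) t0" by (simp add: isCont_def)
qed

lemma mv_scaleR: "M *v (r *\<^sub>R x) = r *\<^sub>R (M *v x)" for M :: "complex^'n^'n"
  by (simp add: vec_eq_iff matrix_vector_mult_def scaleR_sum_right)

lemma smin_hom: "smin M * norm x \<le> norm (M *v x)"
proof (cases "x = 0")
  case True thus ?thesis by simp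
next
  case False
  define u where "u = (1 / norm x) *\<^sub>R x"
  have "norm u = 1" using False by (simp add: u_def)
  hence "smin M \<le> norm (M *v u)" by (rule smin_le)
  also have "norm (M *v u) = norm (M *v x) / norm x" by (simp add: u_def mv_scaleR)
  finally show ?thesis using False by (simp add: le_divide_eq)
qed

lemma not_inv_ker:
  fixes M :: "complex^'n^'n"
  assumes "\<not> invertible M"
  shows "\<exists>x. x \<noteq> 0 \<and> M *v x = 0"
  using assms invertible_left_inverse[of M] matrix_left_invertible_ker[of M] by blast

lemma inv_props:
  fixes M :: "complex^'n^'n"
  assumes "invertible M"
  shows "M ** matrix_inv M = mat 1" "matrix_inv M ** M = mat 1"
  using assms unfolding invertible_def matrix_inv_def by (metis (mono_tags, lifting) someI_ex)+

lemma onorm_Mi: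
  fixes M :: "complex^'n^'n"
  assumes "invertible M" "\<alpha> > 0"
  shows "ereal (1 / \<alpha>) \<le> inv_opnorm M \<longleftrightarrow> smin M \<le> \<alpha>"
proof -
  define Mi where "Mi = matrix_inv M"
  have MMi: "M *v (Mi *v y) = y" for y
    using inv_props(1)[OF assms(1)] by (simp add: Mi_def matrix_vector_mul_assoc)
  have MiM: "Mi *v (M *v y) = y" for y
    using inv_props(2)[OF assms(1)] by (simp add: Mi_def matrix_vector_mul_assoc)
  have bl: "bounded_linear (\<lambda>y. Mi *v y)" by simp
  define on where "on = opnorm Mi"
  have oo: "on = onorm (\<lambda>y. Mi *v y)" by (simp add: on_def opnorm_def)
  have o0: "on \<ge> 0" using onorm_pos_le[OF bl] oo by simp
  have eq: "ereal (1 / \<alpha>) \<le> inv_opnorm M \<longleftrightarrow> 1 / \<alpha> \<le> on"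
    using assms by (simp add: inv_opnorm_def Mi_def on_def)
  show ?thesis unfolding eq
  proof
    assume h: "1 / \<alpha> \<le> on"
    show "smin M \<le> \<alpha>"
    proof (rule ccontr)
      assume "\<not> smin M \<le> \<alpha>"
      hence s: "smin M > \<alpha>" by simp
      have "norm (Mi *v y) \<le> (1 / smin M) * norm y" for y
      proof -
        have "smin M * norm (Mi *v y) \<le> norm (M *v (Mi *v y))" by (rule smin_hom)
        thus ?thesis using s assms(2) by (simp add: MMi field_simps)
      qed
      hence "on \<le> 1 / smin M" unfolding oo by (intro onorm_le) auto
      moreover have "1 / smin M < 1 / \<alpha>" using s assms(2) by (simp add: frac_less2)
      ultimately show False using h by simp
    qed
  next
    assume h: "smin M \<le> \<alpha>"
    show "1 / \<alpha> \<le> on"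
    proof (rule ccontr)
      assume "\<not> 1 / \<alpha> \<le> on"
      hence oa: "on * \<alpha> < 1" using assms(2) by (simp add: field_simps)
      define e where "e = (1 - on * \<alpha>) / (2 * (on + 1))"
      have e0: "e > 0" using oa o0 by (simp add: e_def)
      have "smin M < \<alpha> + e" using h e0 by simp
      then obtain x where x: "norm x = 1" "norm (M *v x) < \<alpha> + e" using smin_less by blast
      have "1 = norm (Mi *v (M *v x))" using x by (simp add: MiM)
      also have "\<dots> \<le> on * norm (M *v x)" using onorm[OF bl] oo by simp
      also have "\<dots> \<le> on * (\<alpha> + e)" using x o0 by (simp add: mult_left_mono)
      finally have "1 \<le> on * \<alpha> + on * e" by (simp add: algebra_simps)
      moreover have "on * e \<le> (1 - on * \<alpha>) / 2"
      proof -
        have "on * e = (1 - on * \<alpha>) / 2 * (on / (on + 1))" using o0 by (simp add: e_def field_simps)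
        also have "\<dots> \<le> (1 - on * \<alpha>) / 2 * 1"
          using oa o0 by (intro mult_left_mono) simp_all
        finally show ?thesis by simp
      qed
      hence "2 * (on * e) \<le> 1 - on * \<alpha>" by simp
      ultimately show False using oa by linarith
    qed
  qed
qed

lemma S_eq:
  fixes M :: "complex^'n^'n"
  assumes "\<alpha> > 0"
  shows "ereal (1 / \<alpha>) \<le> inv_opnorm M \<longleftrightarrow> smin M \<le> \<alpha>"
proof (cases "invertible M")
  case True thus ?thesis using onorm_Mi assms by blast
next
  case False
  then obtain x where x: "x \<noteq> 0" "M *v x = 0" using not_inv_ker by blast
  have "smin M \<le> norm (M *v ((1 / norm x) *\<^sub>R x))" using x by (intro smin_le) simp
  also have "\<dots> = 0" using x by (simp add: mv_scaleR)
  finally show ?thesis using False assms by (simp add: inv_opnorm_def)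
qed

lemma mvR: "(r *\<^sub>R X) *v z = r *\<^sub>R (X *v z)" for X :: "complex^'n^'n"
  by (simp add: vec_eq_iff matrix_vector_mult_def scaleR_sum_right)

lemma hf_add: "herm_form (X + Y) z = herm_form X z + herm_form Y z"
  by (simp add: herm_form_cinner matrix_vector_mult_add_rdistrib cinner_add_right)

lemma hf_diff: "herm_form (X - Y) z = herm_form X z - herm_form Y z"
  by (simp add: herm_form_cinner matrix_vector_mult_diff_rdistrib cinner_diff_right)

lemma scaleR_s: "r *\<^sub>R v = (of_real r :: complex) *s v" for v :: "complex^'n"
  unfolding vec_eq_iff vector_scaleR_component vector_smult_component
  by (simp add: of_real_def)

lemma hf_scaleR: "herm_form (r *\<^sub>R X) z = of_real r * herm_form X z"
  by (simp only: herm_form_cinner mvR scaleR_s cinner_scale_right)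

lemma mm_add: "(X + Y) ** U = X ** U + Y ** U" for X :: "complex^'n^'n"
  by (simp add: vec_eq_iff matrix_matrix_mult_def sum.distrib distrib_right)

lemma bl_hf: "bounded_linear (\<lambda>X::complex^'n^'n. Re (herm_form X z))"
  unfolding linear_conv_bounded_linear[symmetric]
  by (rule linearI) (simp_all add: hf_add hf_scaleR)

lemma mmR: "(r *\<^sub>R X) ** U = r *\<^sub>R (X ** U)" for X :: "complex^'n^'n"
  by (simp add: vec_eq_iff matrix_matrix_mult_def scaleR_sum_right)

lemma bl_mm: "bounded_linear (\<lambda>X::complex^'n^'n. X ** U)"
  unfolding linear_conv_bounded_linear[symmetric]
  by (rule linearI) (simp_all add: mm_add mmR)

lemma scal_id_mv: "((of_real b :: complex^'n) *s mat 1) *v z = (of_real b :: complex) *s z"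
proof -
  have c: "(of_real b :: complex^'n) $ j = of_real b" for j
    by (simp add: of_real_def)
  have e: "((of_real b :: complex^'n) *s mat 1) $ i $ j = (if i = j then of_real b else 0)" for i j
    by (simp add: mat_def c)
  show ?thesis
    by (simp add: vec_eq_iff matrix_vector_mult_def c mat_def if_distrib if_distribR sum.delta cong: if_cong)
qed

lemma loewner_bound:
  assumes "loewner_le ((of_real b :: complex^'n) *s mat 1) Y"
  shows "b * (norm z)^2 \<le> Re (herm_form Y z)"
proof -
  have "0 \<le> Re (herm_form (Y - (of_real b :: complex^'n) *s mat 1) z)"
    using assms by (simp add: loewner_le_def)
  also have "\<dots> = Re (herm_form Y z) - b * (norm z)^2"
    unfolding hf_diff by (simp add: herm_form_cinner scal_id_mv cinner_scale_right norm_sq_cinner)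
  finally show ?thesis by simp
qed

lemma mono_from_deriv:
  fixes A :: "real \<Rightarrow> complex^'n^'n"
  assumes dA: "\<And>t. A differentiable at t"
    and lw: "\<And>\<xi>. loewner_le ((of_real \<beta> :: complex^'n) *s mat 1) (vector_derivative (\<lambda>t. A t ** U) (at \<xi>))"
    and le: "\<xi> \<le> \<eta>"
  shows "Re (herm_form (A \<xi> ** U) z) + \<beta> * (\<eta> - \<xi>) * (norm z)^2 \<le> Re (herm_form (A \<eta> ** U) z)"
proof -
  define B where "B t = A t ** U" for t
  have Bfun: "B = (\<lambda>x. A x ** U)" by (simp add: B_def fun_eq_iff)
  define Bd where "Bd t = vector_derivative A (at t) ** U" for t
  have hB: "(B has_vector_derivative Bd t) (at t)" for t
  proof -
    have "(A has_vector_derivative vector_derivative A (at t)) (at t)"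
      using dA vector_derivative_works by blast
    from bounded_linear.has_vector_derivative[OF bl_mm[of U] this]
    show ?thesis by (simp add: Bd_def Bfun)
  qed
  have vd: "vector_derivative (\<lambda>t. A t ** U) (at t) = Bd t" for t
    using vector_derivative_at[OF hB[of t]] Bfun by simp
  define g where "g t = Re (herm_form (B t) z) - (\<beta> * (norm z)^2) * t" for t
  have hg: "(g has_real_derivative (Re (herm_form (Bd t) z) - \<beta> * (norm z)^2)) (at t)" for t
  proof -
    have "((\<lambda>t. Re (herm_form (B t) z)) has_vector_derivative Re (herm_form (Bd t) z)) (at t)"
      by (rule bounded_linear.has_vector_derivative[OF bl_hf hB])
    hence "((\<lambda>t. Re (herm_form (B t) z)) has_real_derivative Re (herm_form (Bd t) z)) (at t)"
      by (simp add: has_real_derivative_iff_has_vector_derivative)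
    from DERIV_diff[OF this DERIV_cmult_Id[of "\<beta> * (norm z)^2" t]]
    show ?thesis by (simp add: g_def[abs_def])
  qed
  have "g \<xi> \<le> g \<eta>"
  proof (rule DERIV_nonneg_imp_increasing_open[OF le])
    fix t
    have "\<beta> * (norm z)^2 \<le> Re (herm_form (Bd t) z)" using loewner_bound[OF lw[of t]] vd by simp
    thus "\<exists>y. (g has_real_derivative y) (at t) \<and> 0 \<le> y"
      using hg[of t] by (intro exI[of _ "Re (herm_form (Bd t) z) - \<beta> * (norm z)^2"]) simp
  next
    show "continuous_on {\<xi>..\<eta>} g"
      by (rule DERIV_continuous_on) (rule has_field_derivative_at_within[OF hg])
  qed
  hence "Re (herm_form (B \<xi>) z) + \<beta> * (norm z)^2 * (\<eta> - \<xi>) \<le> Re (herm_form (B \<eta>) z)"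
    by (simp add: g_def algebra_simps)
  thus ?thesis by (simp add: B_def mult.commute mult.left_commute)
qed

lemma part_i:
  fixes A :: "real \<Rightarrow> complex^'n^'n" and U :: "complex^'n^'n"
  assumes C1: "A C1_differentiable_on UNIV" and iU: "invertible U"
    and sa: "\<forall>\<xi>. self_adjoint (A \<xi> ** U)" and bp: "0 < \<beta>"
    and lw: "\<forall>\<xi>. loewner_le (of_real \<beta> *s mat 1) (vector_derivative (\<lambda>t. A t ** U) (at \<xi>))"
    and ap: "0 < \<alpha>"
  shows "{\<xi>. ereal (1 / \<alpha>) \<le> inv_opnorm (A \<xi>)} \<in> sets lebesgue \<and>
      emeasure lebesgue {\<xi>. ereal (1 / \<alpha>) \<le> inv_opnorm (A \<xi>)}
        \<le> ennreal (2 * real CARD('n) * \<alpha> / \<beta> * opnorm U)"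
proof -
  have dA: "\<And>t. A differentiable at t" using C1 by (simp add: C1_differentiable_on_eq)
  have contA: "continuous_on UNIV A"
    by (intro differentiable_imp_continuous_on differentiable_at_imp_differentiable_on) (simp add: dA)
  define S where "S = {\<xi>. ereal (1 / \<alpha>) \<le> inv_opnorm (A \<xi>)}"
  have Seq: "S = {\<xi>. smin (A \<xi>) \<le> \<alpha>}" unfolding S_def by (rule Collect_cong) (rule S_eq[OF ap])
  have "closed S" unfolding Seq
    by (rule closed_Collect_le[OF smin_cont[OF contA] continuous_on_const])
  hence Sm: "S \<in> sets lebesgue" by (rule lebesgue_closedI)
  have blU: "bounded_linear (\<lambda>y. U *v y)" by simp
  have oU: "opnorm U \<ge> 0" using onorm_pos_le[OF blU] by (simp add: opnorm_def)
  define K where "K = 2 * real CARD('n) * opnorm U / \<beta>"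
  have K0: "K \<ge> 0" using oU bp by (simp add: K_def)
  have mono: "\<And>\<xi> \<eta> z. \<xi> \<le> \<eta> \<Longrightarrow> Re (herm_form (A \<xi> ** U) z) + \<beta> * (\<eta> - \<xi>) * (norm z)^2
      \<le> Re (herm_form (A \<eta> ** U) z)"
    using mono_from_deriv[OF dA] lw by blast
  have bound: "emeasure lebesgue S \<le> ennreal (K * \<alpha>)"
  proof (rule ennreal_le_epsilon)
    fix e :: real assume e0: "0 < e"
    define \<alpha>' where "\<alpha>' = \<alpha> + e / (K + 1)"
    have aa: "\<alpha> < \<alpha>'" using e0 K0 by (simp add: \<alpha>'_def)
    define c where "c = \<alpha>' * opnorm U"
    have c0: "c \<ge> 0" using aa ap oU by (simp add: c_def)
    have T: "\<exists>v. v \<noteq> 0 \<and> norm ((A \<xi> ** U) *v v) \<le> c * norm v" if "\<xi> \<in> S" for \<xi>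
    proof -
      have "smin (A \<xi>) < \<alpha>'" using that aa by (simp add: Seq)
      then obtain x where x: "norm x = 1" "norm (A \<xi> *v x) < \<alpha>'" using smin_less by blast
      define y where "y = matrix_inv U *v x"
      have Uy: "U *v y = x" using inv_props(1)[OF iU] by (simp add: y_def matrix_vector_mul_assoc)
      have y0: "y \<noteq> 0" using Uy x by auto
      have "norm ((A \<xi> ** U) *v y) = norm (A \<xi> *v x)" by (simp add: matrix_vector_mul_assoc[symmetric] Uy)
      also have "\<dots> \<le> \<alpha>' * norm (U *v y)" using x Uy by simp
      also have "\<dots> \<le> \<alpha>' * (opnorm U * norm y)"
        using onorm[OF blU, of y] aa ap by (intro mult_left_mono) (simp_all add: opnorm_def)
      finally show ?thesis using y0 by (auto simp: c_def mult.assoc)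
    qed
    have "emeasure lebesgue S \<le> ennreal (real CARD('n) * (2 * c / \<beta>))"
      by (rule abstract_main[OF _ mono bp c0 Sm T]) (use sa in auto)
    also have "real CARD('n) * (2 * c / \<beta>) = K * \<alpha> + K * (e / (K + 1))"
      by (simp add: K_def c_def \<alpha>'_def field_simps)
    also have "K * (e / (K + 1)) \<le> e"
    proof -
      have "K * (e / (K + 1)) = e * (K / (K + 1))" by simp
      also have "\<dots> \<le> e * 1" using K0 e0 by (intro mult_left_mono) simp_all
      finally show ?thesis by simp
    qed
    hence "ennreal (K * \<alpha> + K * (e / (K + 1))) \<le> ennreal (K * \<alpha> + e)" by (intro ennreal_leI) simp
    also have "\<dots> = ennreal (K * \<alpha>) + ennreal e" using K0 ap e0 by (simp add: ennreal_plus)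
    finally show "emeasure lebesgue S \<le> ennreal (K * \<alpha>) + ennreal e" .
  qed
  have "K * \<alpha> = 2 * real CARD('n) * \<alpha> / \<beta> * opnorm U" by (simp add: K_def)
  thus ?thesis using Sm bound by (simp add: S_def)
qed

lemma ofreal_smat: "(of_real r :: complex^'n) *s W = r *\<^sub>R (W :: complex^'n^'n)"
  by (simp add: vec_eq_iff of_real_def)

lemma cadj_mult: "cadj (X ** Y) = cadj Y ** cadj (X :: complex^'n^'n)" for Y :: "complex^'n^'n"
  by (simp add: vec_eq_iff cadj_def matrix_matrix_mult_def cnj_sum mult.commute)

lemma cadj_add: "cadj (X + Y) = cadj X + cadj (Y :: complex^'n^'n)"
  by (simp add: vec_eq_iff cadj_def)

lemma cadj_scaleR: "cadj (r *\<^sub>R X) = r *\<^sub>R cadj (X :: complex^'n^'n)"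
  by (simp add: vec_eq_iff cadj_def)

lemma cadj_id: "cadj (mat 1 :: complex^'n^'n) = mat 1"
  by (simp add: vec_eq_iff cadj_def mat_def)

lemma cadj_cadj: "cadj (cadj X) = (X :: complex^'n^'n)"
  by (simp add: vec_eq_iff cadj_def)

lemma sa_inv:
  fixes W :: "complex^'n^'n"
  assumes "self_adjoint W" "invertible W"
  shows "self_adjoint (matrix_inv W)"
proof -
  define Wi where "Wi = matrix_inv W"
  have a: "Wi ** W = mat 1" "W ** Wi = mat 1" using inv_props[OF assms(2)] by (simp_all add: Wi_def)
  have "cadj (Wi ** W) = mat 1" using a by (simp add: cadj_id)
  hence b: "W ** cadj Wi = mat 1" using assms(1) by (simp add: cadj_mult self_adjoint_def)
  have "cadj Wi = (Wi ** W) ** cadj Wi" using a by simp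
  also have "\<dots> = Wi" by (simp add: matrix_mul_assoc[symmetric] b)
  finally show ?thesis by (simp add: self_adjoint_def Wi_def)
qed

lemma loewner_upper:
  assumes "loewner_le Y ((of_real b :: complex^'n) *s mat 1)"
  shows "Re (herm_form Y z) \<le> b * (norm z)^2"
proof -
  have "0 \<le> Re (herm_form ((of_real b :: complex^'n) *s mat 1 - Y) z)"
    using assms by (simp add: loewner_le_def)
  also have "\<dots> = b * (norm z)^2 - Re (herm_form Y z)"
    unfolding hf_diff by (simp add: herm_form_cinner scal_id_mv cinner_scale_right norm_sq_cinner)
  finally show ?thesis by simp
qed

lemma opnorm_Z:
  fixes Z :: "complex^'n^'n"
  assumes sa: "self_adjoint Z" and b1: "0 < b1"
    and l1: "loewner_le ((of_real b1 :: complex^'n) *s mat 1) Z"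
    and l2: "loewner_le Z ((of_real b2 :: complex^'n) *s mat 1)"
  shows "opnorm Z \<le> b2" "b1 \<le> b2"
proof -
  obtain x0 :: "complex^'n" where x0: "norm x0 = 1" using vector_choose_size[of 1] by auto
  have "b1 * (norm x0)^2 \<le> Re (herm_form Z x0)" by (rule loewner_bound[OF l1])
  also have "\<dots> \<le> b2 * (norm x0)^2" by (rule loewner_upper[OF l2])
  finally show b12: "b1 \<le> b2" using x0 by simp
  obtain B where fB: "finite B" and oB: "orthonormal B"
    and eB: "\<forall>b\<in>B. Z *v b = of_real (Re (herm_form Z b)) *s b"
    and cB: "\<And>z. z = (\<Sum>b\<in>B. cinner b z *s b)"
    using spectral[OF sa] by blast
  define lam where "lam b = Re (herm_form Z b)" for b
  have eB': "\<forall>b\<in>B. Z *v b = of_real (lam b) *s b" using eB by (simp add: lam_def)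
  have lamb: "(lam b)^2 \<le> b2^2" if "b \<in> B" for b
  proof -
    have nb: "norm b = 1" using oB that unfolding orthonormal_def by (simp add: norm_eq_1_cinner)
    have "b1 \<le> lam b" using loewner_bound[OF l1, of b] nb by (simp add: lam_def)
    moreover have "lam b \<le> b2" using loewner_upper[OF l2, of b] nb by (simp add: lam_def)
    ultimately show ?thesis using b1 by (intro power_mono) auto
  qed
  have bnd: "norm (Z *v x) \<le> b2 * norm x" for x
  proof -
    have "(norm (Z *v x))^2 = (\<Sum>b\<in>B. (lam b)^2 * (cmod (cinner b x))^2)"
      by (rule comb_facts(3)[OF fB oB eB' cB])
    also have "\<dots> \<le> (\<Sum>b\<in>B. b2^2 * (cmod (cinner b x))^2)"
      by (rule sum_mono) (rule mult_right_mono[OF lamb]; simp)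
    also have "\<dots> = b2^2 * (norm x)^2"
      using comb_facts(2)[OF fB oB eB' cB[of x]] by (simp add: sum_distrib_left)
    finally have "(norm (Z *v x))^2 \<le> (b2 * norm x)^2" by (simp add: power_mult_distrib)
    moreover have "0 \<le> b2 * norm x" using b1 b12 by simp
    ultimately show ?thesis by (rule power2_le_imp_le)
  qed
  show "opnorm Z \<le> b2" unfolding opnorm_def by (rule onorm_le[OF bnd])
qed

lemma Z_inv:
  fixes Z :: "complex^'n^'n"
  assumes b1: "0 < b1" and l1: "loewner_le ((of_real b1 :: complex^'n) *s mat 1) Z"
  shows "invertible Z"
proof -
  have "x = 0" if "Z *v x = 0" for x
  proof -
    have "b1 * (norm x)^2 \<le> Re (herm_form Z x)" by (rule loewner_bound[OF l1])
    also have "\<dots> = 0" using that by (simp add: herm_form_cinner)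
    finally show ?thesis using b1 by (simp add: mult_le_0_iff)
  qed
  hence "\<forall>x. Z *v x = 0 \<longrightarrow> x = 0" by blast
  hence "\<exists>B. B ** Z = mat 1" by (simp add: matrix_left_invertible_ker)
  thus ?thesis by (simp add: invertible_left_inverse)
qed

lemma part_ii:
  fixes Z W :: "complex^'n^'n"
  assumes saZ: "self_adjoint Z" and saW: "self_adjoint W" and iW: "invertible W"
    and b1: "0 < \<beta>\<^sub>1"
    and l1: "loewner_le (of_real \<beta>\<^sub>1 *s mat 1) Z" and l2: "loewner_le Z (of_real \<beta>\<^sub>2 *s mat 1)"
    and ap: "0 < \<alpha>"
  shows "{\<xi>::real. ereal (1 / \<alpha>) \<le> inv_opnorm (Z + of_real \<xi> *s W)} \<in> sets lebesgue \<and>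
      emeasure lebesgue {\<xi>::real. ereal (1 / \<alpha>) \<le> inv_opnorm (Z + of_real \<xi> *s W)}
        \<le> ennreal (2 * real CARD('n) * \<alpha> * \<beta>\<^sub>2 / \<beta>\<^sub>1 * opnorm (matrix_inv W))"
proof -
  define Wi where "Wi = matrix_inv W"
  have WWi: "W ** Wi = mat 1" "Wi ** W = mat 1" using inv_props[OF iW] by (simp_all add: Wi_def)
  define U where "U = Wi ** Z"
  define A where "A \<xi> = Z + (of_real \<xi> :: complex^'n) *s W" for \<xi> :: real
  have Aeq: "A = (\<lambda>t. Z + t *\<^sub>R W)" by (simp add: A_def fun_eq_iff ofreal_smat)
  have AU: "(\<lambda>t. A t ** U) = (\<lambda>t. Z ** U + t *\<^sub>R Z)"
  proof
    fix t
    have "A t ** U = Z ** U + t *\<^sub>R (W ** (Wi ** Z))" by (simp add: Aeq U_def mm_add mmR)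
    also have "W ** (Wi ** Z) = Z" by (simp add: matrix_mul_assoc WWi)
    finally show "A t ** U = Z ** U + t *\<^sub>R Z" .
  qed
  have hA: "(A has_vector_derivative W) (at t)" for t
    unfolding Aeq by (auto intro!: derivative_eq_intros)
  have C1: "A C1_differentiable_on UNIV"
    unfolding C1_differentiable_on_eq
  proof
    show "\<forall>x\<in>UNIV. A differentiable at x" using hA by (auto intro: differentiableI_vector)
    have "vector_derivative A (at x) = W" for x by (rule vector_derivative_at[OF hA])
    thus "continuous_on UNIV (\<lambda>x. vector_derivative A (at x))" by simp
  qed
  have iWi: "invertible Wi" unfolding invertible_def using WWi by blast
  have iU: "invertible U" unfolding U_def by (rule invertible_mult[OF iWi Z_inv[OF b1 l1]])
  have saWi: "self_adjoint Wi" using sa_inv[OF saW iW] by (simp add: Wi_def)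
  have sa: "\<forall>\<xi>. self_adjoint (A \<xi> ** U)"
  proof
    fix \<xi>
    have "cadj (Z ** U) = Z ** U"
      using saZ saWi by (simp add: U_def cadj_mult self_adjoint_def matrix_mul_assoc)
    moreover have "A \<xi> ** U = Z ** U + \<xi> *\<^sub>R Z" using AU by (simp add: fun_eq_iff)
    ultimately show "self_adjoint (A \<xi> ** U)"
      using saZ by (simp add: self_adjoint_def cadj_add cadj_scaleR)
  qed
  have hAU: "((\<lambda>t. A t ** U) has_vector_derivative Z) (at t)" for t
    unfolding AU by (auto intro!: derivative_eq_intros)
  have lw: "\<forall>\<xi>. loewner_le (of_real \<beta>\<^sub>1 *s mat 1) (vector_derivative (\<lambda>t. A t ** U) (at \<xi>))"
    using vector_derivative_at[OF hAU] l1 by simp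
  have P: "{\<xi>. ereal (1 / \<alpha>) \<le> inv_opnorm (A \<xi>)} \<in> sets lebesgue \<and>
      emeasure lebesgue {\<xi>. ereal (1 / \<alpha>) \<le> inv_opnorm (A \<xi>)}
        \<le> ennreal (2 * real CARD('n) * \<alpha> / \<beta>\<^sub>1 * opnorm U)"
    by (rule part_i[OF C1 iU sa b1 lw ap])
  have blWi: "bounded_linear (\<lambda>y. Wi *v y)" and blZ: "bounded_linear (\<lambda>y. Z *v y)" by simp_all
  have "(\<lambda>y. U *v y) = (\<lambda>y. Wi *v y) \<circ> (\<lambda>y. Z *v y)"
    by (simp add: U_def fun_eq_iff matrix_vector_mul_assoc)
  hence "opnorm U \<le> opnorm Wi * opnorm Z"
    unfolding opnorm_def using onorm_compose[OF blWi blZ] by simp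
  also have "\<dots> \<le> opnorm Wi * \<beta>\<^sub>2"
    using opnorm_Z(1)[OF saZ b1 l1 l2] onorm_pos_le[OF blWi]
    by (intro mult_left_mono) (simp_all add: opnorm_def)
  finally have oU: "opnorm U \<le> opnorm Wi * \<beta>\<^sub>2" .
  have "2 * real CARD('n) * \<alpha> / \<beta>\<^sub>1 * opnorm U \<le> 2 * real CARD('n) * \<alpha> / \<beta>\<^sub>1 * (opnorm Wi * \<beta>\<^sub>2)"
    using oU ap b1 by (intro mult_left_mono) simp_all
  also have "\<dots> = 2 * real CARD('n) * \<alpha> * \<beta>\<^sub>2 / \<beta>\<^sub>1 * opnorm (matrix_inv W)"
    by (simp add: Wi_def)
  finally have le: "ennreal (2 * real CARD('n) * \<alpha> / \<beta>\<^sub>1 * opnorm U)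
      \<le> ennreal (2 * real CARD('n) * \<alpha> * \<beta>\<^sub>2 / \<beta>\<^sub>1 * opnorm (matrix_inv W))"
    by (rule ennreal_leI)
  show ?thesis using P le unfolding A_def by (meson order_trans)
qed

theorem lemma6p2:
  shows
  "(\<forall>(A :: real \<Rightarrow> complex^'n::finite^'n) (U :: complex^'n^'n) (\<beta>::real) (\<alpha>::real).
      A C1_differentiable_on UNIV \<longrightarrow> invertible U \<longrightarrow>
      (\<forall>\<xi>. self_adjoint (A \<xi> ** U)) \<longrightarrow> 0 < \<beta> \<longrightarrow>
      (\<forall>\<xi>. loewner_le (of_real \<beta> *s mat 1) (vector_derivative (\<lambda>t. A t ** U) (at \<xi>))) \<longrightarrow>
      0 < \<alpha> \<longrightarrow>
      {\<xi>. ereal (1 / \<alpha>) \<le> inv_opnorm (A \<xi>)} \<in> sets lebesgue \<and>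
      emeasure lebesgue {\<xi>. ereal (1 / \<alpha>) \<le> inv_opnorm (A \<xi>)}
        \<le> ennreal (2 * real CARD('n) * \<alpha> / \<beta> * opnorm U))
   \<and>
   (\<forall>(Z :: complex^'n^'n) (W :: complex^'n^'n) (\<beta>\<^sub>1::real) (\<beta>\<^sub>2::real) (\<alpha>::real).
      self_adjoint Z \<longrightarrow> self_adjoint W \<longrightarrow> invertible W \<longrightarrow> 0 < \<beta>\<^sub>1 \<longrightarrow>
      loewner_le (of_real \<beta>\<^sub>1 *s mat 1) Z \<longrightarrow> loewner_le Z (of_real \<beta>\<^sub>2 *s mat 1) \<longrightarrow>
      0 < \<alpha> \<longrightarrow>
      {\<xi>::real. ereal (1 / \<alpha>) \<le> inv_opnorm (Z + of_real \<xi> *s W)} \<in> sets lebesgue \<and>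
      emeasure lebesgue {\<xi>::real. ereal (1 / \<alpha>) \<le> inv_opnorm (Z + of_real \<xi> *s W)}
        \<le> ennreal (2 * real CARD('n) * \<alpha> * \<beta>\<^sub>2 / \<beta>\<^sub>1 * opnorm (matrix_inv W)))"
  apply (rule conjI)
   apply (intro allI impI)
   apply (rule part_i; assumption)
  apply (intro allI impI)
  apply (rule part_ii; assumption)
  done

end
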